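(* Let $F\in[0,1]$ and $0\le p\le F$. For $i,j\in\{0,1\}$ let $F'_{ij,\max}=\max\{F'_{ij}(\rho_1\otimes\rho_2):\rho_1,\rho_2\in S_{p,F}\}$ and $F'_{ij,\min}=\min\{F'_{ij}(\rho_1\otimes\rho_2):\rho_1,\rho_2\in S_{p,F}\}$. Then these quantities do not depend on $(i,j)$: $F'_{ij,\max}=F'_{00,\max}$ and $F'_{ij,\min}=F'_{00,\min}$ for all $i,j$.
   Context: For qubit registers $(R,T)$, $|\Psi_{ij}\rangle_{RT}=(I_R\otimes(X^iZ^j)_T)\tfrac1{\sqrt2}(|00\rangle+|11\rangle)$. $S_{p,F}$ is the set of two-qubit density operators $\rho$ with $\rho=p|\Psi_{00}\rangle\langle\Psi_{00}|+(1-p)\sigma$ for some density operator $\sigma$ and $\langle\Psi_{00}|\rho|\Psi_{00}\rangle=F$. For $\rho_1$ on $(A_1,B_1)$ and $\rho_2$ on $(A_2,B_2)$, $p'_{ij}(\rho_1\otimes\rho_2)=\mathrm{Tr}[|\Psi_{ij}\rangle\langle\Psi_{ij}|_{A_1A_2}\rho_1\otimes\rho_2]$ and $F'_{ij}(\rho_1\otimes\rho_2)=\frac1{p'_{ij}}\mathrm{Tr}[|\Psi_{ij}\rangle\langle\Psi_{ij}|_{B_1B_2}|\Psi_{ij}\rangle\langle\Psi_{ij}|_{A_1A_2}\rho_1\otimes\rho_2]$ (postselected end-to-end fidelity of an entanglement swap with Bell-state measurement outcome $ij$ on $(A_1,A_2)$). *)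

theory Defs
  imports Complex_Main "HOL-Library.Complex_Order"
begin

text \<open>Qubit basis: False = |0>, True = |1>. Operators on a finite-dimensional
system with basis indexed by a finite type 'a are matrices 'a => 'a => complex.\<close>

type_synonym 'a qop = "'a \<Rightarrow> 'a \<Rightarrow> complex"

definition mmult :: "('a::finite) qop \<Rightarrow> 'a qop \<Rightarrow> 'a qop" where
  "mmult A B = (\<lambda>x y. \<Sum>z\<in>UNIV. A x z * B z y)"

definition mid :: "('a::finite) qop" where
  "mid = (\<lambda>x y. if x = y then 1 else 0)"

fun mpow :: "('a::finite) qop \<Rightarrow> nat \<Rightarrow> 'a qop" where
  "mpow A 0 = mid"
| "mpow A (Suc n) = mmult A (mpow A n)"

definition trace :: "('a::finite) qop \<Rightarrow> complex" where
  "trace A = (\<Sum>x\<in>UNIV. A x x)"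

definition density :: "('a::finite) qop \<Rightarrow> bool" where
  "density \<rho> \<longleftrightarrow> (\<forall>x y. \<rho> x y = cnj (\<rho> y x))
     \<and> (\<forall>v::'a \<Rightarrow> complex. (\<Sum>x\<in>UNIV. \<Sum>y\<in>UNIV. cnj (v x) * \<rho> x y * v y) \<ge> 0)
     \<and> trace \<rho> = 1"

definition pauliX :: "bool qop" where
  "pauliX = (\<lambda>a b. if a \<noteq> b then 1 else 0)"

definition pauliZ :: "bool qop" where
  "pauliZ = (\<lambda>a b. if a = b then (if a then -1 else 1) else 0)"

definition phi_plus :: "bool \<times> bool \<Rightarrow> complex" where
  "phi_plus = (\<lambda>(r, t). if r = t then complex_of_real (1 / sqrt 2) else 0)"

text \<open>Psi_ij = (I_R (x) (X^i Z^j)_T) phi_plus, as a vector indexed by (r,t).\<close>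
definition bell :: "nat \<Rightarrow> nat \<Rightarrow> bool \<times> bool \<Rightarrow> complex" where
  "bell i j = (\<lambda>(r, t). \<Sum>s\<in>UNIV. mmult (mpow pauliX i) (mpow pauliZ j) t s * phi_plus (r, s))"

definition proj :: "('a \<Rightarrow> complex) \<Rightarrow> 'a qop" where
  "proj \<psi> = (\<lambda>x y. \<psi> x * cnj (\<psi> y))"

definition expect :: "('a::finite \<Rightarrow> complex) \<Rightarrow> 'a qop \<Rightarrow> complex" where
  "expect \<psi> \<rho> = (\<Sum>x\<in>UNIV. \<Sum>y\<in>UNIV. cnj (\<psi> x) * \<rho> x y * \<psi> y)"

definition S_pF :: "real \<Rightarrow> real \<Rightarrow> (bool \<times> bool) qop set" where
  "S_pF p F = {\<rho>. density \<rho>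
      \<and> (\<exists>\<sigma>. density \<sigma> \<and>
            \<rho> = (\<lambda>x y. complex_of_real p * proj (bell 0 0) x y + complex_of_real (1 - p) * \<sigma> x y))
      \<and> expect (bell 0 0) \<rho> = complex_of_real F}"

text \<open>Four-qubit system indexed as ((a1,b1),(a2,b2)) for registers (A1,B1),(A2,B2).\<close>
type_synonym four = "(bool \<times> bool) \<times> (bool \<times> bool)"

definition tensor :: "('a::finite) qop \<Rightarrow> ('b::finite) qop \<Rightarrow> ('a \<times> 'b) qop" where
  "tensor A B = (\<lambda>(x1, x2) (y1, y2). A x1 y1 * B x2 y2)"

text \<open>|Psi_ij><Psi_ij| acting on (A1,A2) (R = A1, T = A2), identity on B1 B2.\<close>
definition projA :: "nat \<Rightarrow> nat \<Rightarrow> four qop" where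
  "projA i j = (\<lambda>((a1, b1), (a2, b2)) ((a1', b1'), (a2', b2')).
      proj (bell i j) (a1, a2) (a1', a2') * (if b1 = b1' \<and> b2 = b2' then 1 else 0))"

text \<open>|Psi_ij><Psi_ij| acting on (B1,B2) (R = B1, T = B2), identity on A1 A2.\<close>
definition projB :: "nat \<Rightarrow> nat \<Rightarrow> four qop" where
  "projB i j = (\<lambda>((a1, b1), (a2, b2)) ((a1', b1'), (a2', b2')).
      proj (bell i j) (b1, b2) (b1', b2') * (if a1 = a1' \<and> a2 = a2' then 1 else 0))"

text \<open>p'_ij and F'_ij (these traces are real; we take real parts).\<close>
definition p_swap :: "nat \<Rightarrow> nat \<Rightarrow> (bool \<times> bool) qop \<Rightarrow> (bool \<times> bool) qop \<Rightarrow> real" where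
  "p_swap i j \<rho>1 \<rho>2 = Re (trace (mmult (projA i j) (tensor \<rho>1 \<rho>2)))"

definition F_swap :: "nat \<Rightarrow> nat \<Rightarrow> (bool \<times> bool) qop \<Rightarrow> (bool \<times> bool) qop \<Rightarrow> real" where
  "F_swap i j \<rho>1 \<rho>2 =
     Re (trace (mmult (projB i j) (mmult (projA i j) (tensor \<rho>1 \<rho>2)))) / p_swap i j \<rho>1 \<rho>2"

text \<open>Set of attainable postselected fidelities for outcome ij, over pairs in S_{p,F}
for which the outcome ij has nonzero probability (F'_ij is undefined otherwise).\<close>
definition F_vals :: "nat \<Rightarrow> nat \<Rightarrow> real \<Rightarrow> real \<Rightarrow> real set" where
  "F_vals i j p F = {F_swap i j \<rho>1 \<rho>2 | \<rho>1 \<rho>2.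
      \<rho>1 \<in> S_pF p F \<and> \<rho>2 \<in> S_pF p F \<and> p_swap i j \<rho>1 \<rho>2 > 0}"

end

theory Submission
  imports Defs
begin

definition sc :: "('a::finite \<Rightarrow> 'a) \<Rightarrow> ('a \<Rightarrow> real) \<Rightarrow> 'a qop \<Rightarrow> 'a qop" where
  "sc \<pi> g A = (\<lambda>x y. complex_of_real (g x * g y) * A (\<pi> x) (\<pi> y))"

lemma sum_inv_reindex:
  fixes \<pi> :: "'a::finite \<Rightarrow> 'a"
  assumes inv: "\<And>x. \<pi> (\<pi> x) = x"
  shows "(\<Sum>z\<in>UNIV. f (\<pi> z)) = (\<Sum>z\<in>UNIV. (f z :: 'b::comm_monoid_add))"
proof -
  have "bij_betw \<pi> UNIV UNIV"
    by (rule bij_betw_byWitness[where f'=\<pi>]) (auto simp: inv)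
  then show ?thesis by (rule sum.reindex_bij_betw)
qed

locale sperm =
  fixes \<pi> :: "'a::finite \<Rightarrow> 'a" and g :: "'a \<Rightarrow> real"
  assumes inv: "\<And>x. \<pi> (\<pi> x) = x"
    and sq: "\<And>x. g x * g x = 1"
    and gp: "\<And>x. g (\<pi> x) = g x"
begin

lemma sqc: "complex_of_real (g x) * complex_of_real (g x) = 1"
  by (metis of_real_1 of_real_mult sq)

lemma mmult_sc: "mmult (sc \<pi> g A) (sc \<pi> g B) = sc \<pi> g (mmult A B)"
proof (intro ext)
  fix x y
  have "mmult (sc \<pi> g A) (sc \<pi> g B) x y
     = (\<Sum>z\<in>UNIV. complex_of_real (g x * g y) * (A (\<pi> x) (\<pi> z) * B (\<pi> z) (\<pi> y)))"
    unfolding mmult_def sc_def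
  proof (rule sum.cong)
    fix z
    have "complex_of_real (g x * g z) * A (\<pi> x) (\<pi> z) * (complex_of_real (g z * g y) * B (\<pi> z) (\<pi> y))
      = complex_of_real (g x * g y) * (complex_of_real (g z) * complex_of_real (g z)) * (A (\<pi> x) (\<pi> z) * B (\<pi> z) (\<pi> y))"
      by (simp add: algebra_simps)
    then show "complex_of_real (g x * g z) * A (\<pi> x) (\<pi> z) * (complex_of_real (g z * g y) * B (\<pi> z) (\<pi> y))
      = complex_of_real (g x * g y) * (A (\<pi> x) (\<pi> z) * B (\<pi> z) (\<pi> y))" by (simp add: sqc)
  qed simp
  also have "\<dots> = (\<Sum>z\<in>UNIV. complex_of_real (g x * g y) * (A (\<pi> x) z * B z (\<pi> y)))"
    by (rule sum_inv_reindex[OF inv, where f="\<lambda>z. complex_of_real (g x * g y) * (A (\<pi> x) z * B z (\<pi> y))"])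
  also have "\<dots> = sc \<pi> g (mmult A B) x y"
    unfolding sc_def mmult_def by (simp add: sum_distrib_left)
  finally show "mmult (sc \<pi> g A) (sc \<pi> g B) x y = sc \<pi> g (mmult A B) x y" .
qed

lemma trace_sc: "trace (sc \<pi> g A) = trace A"
proof -
  have "trace (sc \<pi> g A) = (\<Sum>x\<in>UNIV. A (\<pi> x) (\<pi> x))"
    unfolding trace_def sc_def by (simp add: sqc)
  also have "\<dots> = trace A" unfolding trace_def by (rule sum_inv_reindex[OF inv])
  finally show ?thesis .
qed

lemma sc_sc: "sc \<pi> g (sc \<pi> g A) = A"
proof (intro ext)
  fix x y
  have "sc \<pi> g (sc \<pi> g A) x y = (complex_of_real (g x) * complex_of_real (g x)) * (complex_of_real (g y) * complex_of_real (g y)) * A x y"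
    unfolding sc_def by (simp add: inv gp algebra_simps)
  then show "sc \<pi> g (sc \<pi> g A) x y = A x y" by (simp add: sqc)
qed

lemma double_reindex:
  "(\<Sum>x\<in>UNIV. \<Sum>y\<in>UNIV. F (\<pi> x) (\<pi> y)) = (\<Sum>x\<in>UNIV. \<Sum>y\<in>UNIV. (F x y :: complex))"
proof -
  have "(\<Sum>x\<in>UNIV. \<Sum>y\<in>UNIV. F (\<pi> x) (\<pi> y)) = (\<Sum>x\<in>UNIV. \<Sum>y\<in>UNIV. F (\<pi> x) y)"
    by (rule sum.cong[OF refl]) (rule sum_inv_reindex[OF inv, where f="\<lambda>y. F (\<pi> _) y"])
  also have "\<dots> = (\<Sum>x\<in>UNIV. \<Sum>y\<in>UNIV. F x y)"
    by (rule sum_inv_reindex[OF inv, where f="\<lambda>x. \<Sum>y\<in>UNIV. F x y"])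
  finally show ?thesis .
qed

lemma expect_sc_gen:
  "expect \<psi> (sc \<pi> g A) = expect (\<lambda>u. \<psi> (\<pi> u) * complex_of_real (g (\<pi> u))) A"
proof -
  define F where "F = (\<lambda>u v. cnj (\<psi> (\<pi> u) * complex_of_real (g (\<pi> u))) * A u v * (\<psi> (\<pi> v) * complex_of_real (g (\<pi> v))))"
  have "expect \<psi> (sc \<pi> g A) = (\<Sum>x\<in>UNIV. \<Sum>y\<in>UNIV. F (\<pi> x) (\<pi> y))"
    unfolding expect_def sc_def F_def
    by (intro sum.cong refl) (simp add: inv gp ac_simps)
  also have "\<dots> = (\<Sum>x\<in>UNIV. \<Sum>y\<in>UNIV. F x y)" by (rule double_reindex)
  also have "\<dots> = expect (\<lambda>u. \<psi> (\<pi> u) * complex_of_real (g (\<pi> u))) A"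
    unfolding F_def expect_def ..
  finally show ?thesis .
qed

lemma expect_sc:
  assumes "\<And>x. \<psi> (\<pi> x) * complex_of_real (g (\<pi> x)) = \<psi> x"
  shows "expect \<psi> (sc \<pi> g A) = expect \<psi> A"
proof -
  have "(\<lambda>u. \<psi> (\<pi> u) * complex_of_real (g (\<pi> u))) = \<psi>" using assms by (intro ext)
  then show ?thesis using expect_sc_gen by simp
qed

lemma density_sc:
  assumes "density \<rho>" shows "density (sc \<pi> g \<rho>)"
proof -
  have h: "\<forall>x y. \<rho> x y = cnj (\<rho> y x)" and psd: "\<forall>v::'a \<Rightarrow> complex. (\<Sum>x\<in>UNIV. \<Sum>y\<in>UNIV. cnj (v x) * \<rho> x y * v y) \<ge> 0"
    and t: "trace \<rho> = 1" using assms unfolding density_def by blast+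
  have "sc \<pi> g \<rho> x y = cnj (sc \<pi> g \<rho> y x)" for x y
    using h[rule_format, of "\<pi> x" "\<pi> y"] unfolding sc_def by (simp add: mult.commute)
  then have "\<forall>x y. sc \<pi> g \<rho> x y = cnj (sc \<pi> g \<rho> y x)" by blast
  moreover have "(\<Sum>x\<in>UNIV. \<Sum>y\<in>UNIV. cnj (v x) * sc \<pi> g \<rho> x y * v y) \<ge> 0" for v :: "'a \<Rightarrow> complex"
  proof -
    have "(\<Sum>x\<in>UNIV. \<Sum>y\<in>UNIV. cnj (v x) * sc \<pi> g \<rho> x y * v y) = expect v (sc \<pi> g \<rho>)"
      unfolding expect_def ..
    also have "\<dots> = expect (\<lambda>u. v (\<pi> u) * complex_of_real (g (\<pi> u))) \<rho>" by (rule expect_sc_gen)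
    also have "\<dots> \<ge> 0" using psd[rule_format, of "\<lambda>u. v (\<pi> u) * complex_of_real (g (\<pi> u))"] unfolding expect_def .
    finally show ?thesis .
  qed
  moreover have "trace (sc \<pi> g \<rho>) = 1" using t trace_sc by simp
  ultimately show ?thesis unfolding density_def by blast
qed

lemma proj_sc:
  assumes "\<And>x. \<psi> (\<pi> x) * complex_of_real (g (\<pi> x)) = \<psi> x"
  shows "sc \<pi> g (proj \<psi>) = proj \<psi>"
proof (intro ext)
  fix x y
  have "sc \<pi> g (proj \<psi>) x y = (\<psi> (\<pi> x) * complex_of_real (g (\<pi> x))) * cnj (\<psi> (\<pi> y) * complex_of_real (g (\<pi> y)))"
    unfolding sc_def proj_def by (simp add: gp algebra_simps)
  then show "sc \<pi> g (proj \<psi>) x y = proj \<psi> x y" by (simp add: assms proj_def)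
qed

lemma sc_lin: "sc \<pi> g (\<lambda>x y. a * P x y + b * S x y) = (\<lambda>x y. a * sc \<pi> g P x y + b * sc \<pi> g S x y)"
  unfolding sc_def by (intro ext) (simp add: algebra_simps)

end

definition tau :: "nat \<Rightarrow> bool \<times> bool \<Rightarrow> bool \<times> bool" where
  "tau i = (\<lambda>(a, b). (a \<noteq> (i = 1), b \<noteq> (i = 1)))"

definition hh :: "nat \<Rightarrow> bool \<times> bool \<Rightarrow> real" where
  "hh j = (\<lambda>(a, b). if j = 1 \<and> a \<noteq> b then -1 else 1)"

definition piQ :: "nat \<Rightarrow> four \<Rightarrow> four" where
  "piQ i = (\<lambda>(x1, x2). (x1, tau i x2))"

definition gQ :: "nat \<Rightarrow> four \<Rightarrow> real" where
  "gQ j = (\<lambda>(x1, x2). hh j x2)"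

lemma sperm_T: "sperm (tau i) (hh j)"
  by unfold_locales (auto simp: tau_def hh_def)

lemma sperm_Q: "sperm (piQ i) (gQ j)"
  by unfold_locales (auto simp: piQ_def gQ_def tau_def hh_def)

lemma tensor_sc: "tensor r1 (sc (tau i) (hh j) r2) = sc (piQ i) (gQ j) (tensor r1 r2)"
proof (intro ext)
  fix x y :: four
  show "tensor r1 (sc (tau i) (hh j) r2) x y = sc (piQ i) (gQ j) (tensor r1 r2) x y"
    by (cases x; cases y) (simp add: tensor_def sc_def piQ_def gQ_def algebra_simps)
qed


definition bR :: "nat \<Rightarrow> nat \<Rightarrow> bool \<times> bool \<Rightarrow> real" where
  "bR i j = (\<lambda>(r, t). if t = (r \<noteq> (i = 1)) then (if j = 1 \<and> r then -1 else 1) / sqrt 2 else 0)"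

lemma bell_closed:
  assumes "i \<in> {0, 1}" "j \<in> {0, 1}"
  shows "bell i j x = complex_of_real (bR i j x)"
  using assms
  by (cases x; cases "fst x"; cases "snd x"; auto simp: bell_def bR_def mmult_def mid_def
        pauliX_def pauliZ_def phi_plus_def UNIV_bool)

lemma projA_closed:
  assumes "i \<in> {0, 1}" "j \<in> {0, 1}"
  shows "projA i j ((a1, b1), (a2, b2)) ((c1, d1), (c2, d2)) =
    complex_of_real (bR i j (a1, a2) * bR i j (c1, c2) * (if b1 = d1 \<and> b2 = d2 then 1 else 0))"
  by (simp add: projA_def proj_def bell_closed[OF assms])

lemma projB_closed:
  assumes "i \<in> {0, 1}" "j \<in> {0, 1}"
  shows "projB i j ((a1, b1), (a2, b2)) ((c1, d1), (c2, d2)) =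
    complex_of_real (bR i j (b1, b2) * bR i j (d1, d2) * (if a1 = c1 \<and> a2 = c2 then 1 else 0))"
  by (simp add: projB_def proj_def bell_closed[OF assms])

definition hA :: "nat \<Rightarrow> bool \<Rightarrow> real" where
  "hA j t = (if j = 1 \<and> t then -1 else 1)"

definition sgn_ij :: "nat \<Rightarrow> nat \<Rightarrow> real" where
  "sgn_ij i j = (if i = 1 \<and> j = 1 then -1 else 1)"

lemma bR_fact:
  assumes "i \<in> {0, 1}" "j \<in> {0, 1}"
  shows "bR i j (a, t) = sgn_ij i j * hA j t * bR 0 0 (a, t \<noteq> (i = 1))"
  using assms by (cases a; cases t; auto simp: bR_def sgn_ij_def hA_def)

lemma hh_fact: "hh j (a, b) = hA j a * hA j b"
  by (auto simp: hh_def hA_def)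

lemma hA_sq: "hA j t * hA j t = 1" by (simp add: hA_def)
lemma sgn_sq: "sgn_ij i j * sgn_ij i j = 1" by (simp add: sgn_ij_def)

lemma eA:
  assumes "i \<in> {0, 1}" "j \<in> {0, 1}"
  shows "bR i j (a1, a2) * bR i j (c1, c2) * (if b1 = d1 \<and> b2 = d2 then 1 else 0) =
    hh j (a2, b2) * hh j (c2, d2) * (bR 0 0 (a1, a2 \<noteq> (i = 1)) * bR 0 0 (c1, c2 \<noteq> (i = 1)) * (if b1 = d1 \<and> (b2 \<noteq> (i = 1)) = (d2 \<noteq> (i = 1)) then 1 else 0))"
proof (cases "b1 = d1 \<and> b2 = d2")
  case True
  have "bR i j (a1, a2) * bR i j (c1, c2) = (sgn_ij i j * sgn_ij i j) * hA j a2 * hA j c2 *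
     (bR 0 0 (a1, a2 \<noteq> (i = 1)) * bR 0 0 (c1, c2 \<noteq> (i = 1)))"
    by (simp add: bR_fact[OF assms] algebra_simps)
  moreover have "hh j (a2, b2) * hh j (c2, d2) = hA j a2 * hA j c2 * (hA j d2 * hA j d2)"
    using True by (simp add: hh_fact algebra_simps)
  ultimately show ?thesis using True by (simp add: sgn_sq hA_sq)
next
  case False
  then show ?thesis by auto
qed

lemma bell00_cond: "bell 0 0 (tau i x) * complex_of_real (hh j (tau i x)) = bell 0 0 x"
proof -
  obtain a b where x: "x = (a, b)" by (metis prod.exhaust)
  show ?thesis unfolding x
    by (cases a; cases b; simp add: bell_closed[of 0 0] bR_def tau_def hh_def)
qed

lemma projA_sc:
  assumes "i \<in> {0, 1}" "j \<in> {0, 1}"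
  shows "projA i j = sc (piQ i) (gQ j) (projA 0 0)"
proof (intro ext)
  fix x y :: four
  obtain a1 b1 a2 b2 where x: "x = ((a1, b1), (a2, b2))" by (metis prod.exhaust)
  obtain c1 d1 c2 d2 where y: "y = ((c1, d1), (c2, d2))" by (metis prod.exhaust)
  note e = eA[OF assms, of a1 a2 c1 c2 b1 d1 b2 d2]
  show "projA i j x y = sc (piQ i) (gQ j) (projA 0 0) x y"
    unfolding x y sc_def
    by (simp add: projA_closed[OF assms] projA_closed[of 0 0] piQ_def gQ_def tau_def e del: of_real_mult, simp)
qed

lemma projB_sc:
  assumes "i \<in> {0, 1}" "j \<in> {0, 1}"
  shows "projB i j = sc (piQ i) (gQ j) (projB 0 0)"
proof (intro ext)
  fix x y :: four
  obtain a1 b1 a2 b2 where x: "x = ((a1, b1), (a2, b2))" by (metis prod.exhaust)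
  obtain c1 d1 c2 d2 where y: "y = ((c1, d1), (c2, d2))" by (metis prod.exhaust)
  have e: "bR i j (b1, b2) * bR i j (d1, d2) * (if a1 = c1 \<and> a2 = c2 then 1 else 0) =
    hh j (a2, b2) * hh j (c2, d2) * (bR 0 0 (b1, b2 \<noteq> (i = 1)) * bR 0 0 (d1, d2 \<noteq> (i = 1)) * (if a1 = c1 \<and> (a2 \<noteq> (i = 1)) = (c2 \<noteq> (i = 1)) then 1 else 0))"
    using eA[OF assms, of b1 b2 d1 d2 a1 c1 a2 c2] by (simp add: hh_fact mult.commute)
  show "projB i j x y = sc (piQ i) (gQ j) (projB 0 0) x y"
    unfolding x y sc_def
    by (simp add: projB_closed[OF assms] projB_closed[of 0 0] piQ_def gQ_def tau_def e del: of_real_mult, simp)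
qed

lemma S_closed:
  assumes "\<rho> \<in> S_pF p F"
  shows "sc (tau i) (hh j) \<rho> \<in> S_pF p F"
proof -
  interpret T: sperm "tau i" "hh j" by (rule sperm_T)
  from assms obtain \<sigma> where d: "density \<rho>" and ds: "density \<sigma>"
    and r: "\<rho> = (\<lambda>x y. complex_of_real p * proj (bell 0 0) x y + complex_of_real (1 - p) * \<sigma> x y)"
    and e: "expect (bell 0 0) \<rho> = complex_of_real F"
    unfolding S_pF_def by blast
  have pr: "sc (tau i) (hh j) (proj (bell 0 0)) = proj (bell 0 0)"
    by (rule T.proj_sc) (rule bell00_cond)
  have "sc (tau i) (hh j) \<rho> = (\<lambda>x y. complex_of_real p * proj (bell 0 0) x y + complex_of_real (1 - p) * sc (tau i) (hh j) \<sigma> x y)"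
    unfolding r T.sc_lin pr ..
  moreover have "expect (bell 0 0) (sc (tau i) (hh j) \<rho>) = complex_of_real F"
    using e T.expect_sc[OF bell00_cond] by simp
  ultimately show ?thesis
    unfolding S_pF_def using T.density_sc[OF d] T.density_sc[OF ds] by blast
qed

lemma swap_eq:
  assumes "i \<in> {0, 1}" "j \<in> {0, 1}"
  shows "p_swap i j r1 (sc (tau i) (hh j) r2) = p_swap 0 0 r1 r2"
    and "F_swap i j r1 (sc (tau i) (hh j) r2) = F_swap 0 0 r1 r2"
proof -
  interpret Q: sperm "piQ i" "gQ j" by (rule sperm_Q)
  show 1: "p_swap i j r1 (sc (tau i) (hh j) r2) = p_swap 0 0 r1 r2"
    unfolding p_swap_def tensor_sc projA_sc[OF assms] Q.mmult_sc Q.trace_sc ..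
  show "F_swap i j r1 (sc (tau i) (hh j) r2) = F_swap 0 0 r1 r2"
    unfolding F_swap_def 1
    unfolding tensor_sc projA_sc[OF assms] projB_sc[OF assms] Q.mmult_sc Q.trace_sc ..
qed

lemma F_vals_eq:
  assumes "i \<in> {0, 1}" "j \<in> {0, 1}"
  shows "F_vals i j p F = F_vals 0 0 p F"
proof -
  interpret T: sperm "tau i" "hh j" by (rule sperm_T)
  show ?thesis
  proof (intro set_eqI iffI)
    fix x assume "x \<in> F_vals i j p F"
    then obtain r1 r2 where x: "x = F_swap i j r1 r2" and s1: "r1 \<in> S_pF p F" and s2: "r2 \<in> S_pF p F"
      and pp: "p_swap i j r1 r2 > 0" unfolding F_vals_def by blast
    define r2' where "r2' = sc (tau i) (hh j) r2"
    have r2: "r2 = sc (tau i) (hh j) r2'" unfolding r2'_def T.sc_sc ..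
    have "r2' \<in> S_pF p F" unfolding r2'_def by (rule S_closed[OF s2])
    moreover have "x = F_swap 0 0 r1 r2'" using x swap_eq(2)[OF assms] r2 by simp
    moreover have "p_swap 0 0 r1 r2' > 0" using pp swap_eq(1)[OF assms] r2 by simp
    ultimately show "x \<in> F_vals 0 0 p F" unfolding F_vals_def using s1 by blast
  next
    fix x assume "x \<in> F_vals 0 0 p F"
    then obtain r1 r2 where x: "x = F_swap 0 0 r1 r2" and s1: "r1 \<in> S_pF p F" and s2: "r2 \<in> S_pF p F"
      and pp: "p_swap 0 0 r1 r2 > 0" unfolding F_vals_def by blast
    have "sc (tau i) (hh j) r2 \<in> S_pF p F" by (rule S_closed[OF s2])
    moreover have "x = F_swap i j r1 (sc (tau i) (hh j) r2)" using x swap_eq(2)[OF assms] by simp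
    moreover have "p_swap i j r1 (sc (tau i) (hh j) r2) > 0" using pp swap_eq(1)[OF assms] by simp
    ultimately show "x \<in> F_vals i j p F" unfolding F_vals_def using s1 by blast
  qed
qed

theorem proposition3:
  fixes p F :: real and i j :: nat
  assumes "0 \<le> F" and "F \<le> 1" and "0 \<le> p" and "p \<le> F"
    and "i \<in> {0, 1}" and "j \<in> {0, 1}"
  shows "Sup (F_vals i j p F) = Sup (F_vals 0 0 p F)
       \<and> Inf (F_vals i j p F) = Inf (F_vals 0 0 p F)"
  using F_vals_eq[OF assms(5,6)] by simp

end
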